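(* Let $q$ be a prime power, $k\ge 3$, $n\ge \frac{k(k+1)}{2}-2$, and let $\alpha_1,\dots,\alpha_n\in\mathbb F_q$ be pairwise distinct. Then there exist $\mathbf i=(i_1,\dots,i_{k-1}),\mathbf j=(j_1,\dots,j_{k-1})\in S_{k-1}(n)$ such that $j_\ell<i_\ell\le \frac{k(k+1)}2-2$ for all $\ell=1,\dots,k-1$ and the $(k-1)\times(k-1)$ matrix over $\mathbb F_q$ whose $(r,s)$ entry is $\alpha_{i_s}^{\,r}-\alpha_{j_s}^{\,r}$ ($1\le r,s\le k-1$) is invertible.
   Context: For $1\le t\le n$, $S_t(n)=\{(i_1,\dots,i_t)\in\{1,\dots,n\}^t:\ 1\le i_1<i_2<\dots<i_t\le n\}$. *)

theory Defs
  imports "Jordan_Normal_Form.Matrix"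
begin

text \<open>S_t(n): strictly increasing t-tuples (i_1,...,i_t) with entries in {1..n};
  a tuple is represented by a function nat => nat, only its values on {1..t} matter.\<close>
definition in_S :: "nat \<Rightarrow> nat \<Rightarrow> (nat \<Rightarrow> nat) \<Rightarrow> bool" where
  "in_S t n i \<longleftrightarrow> (\<forall>l\<in>{1..t}. 1 \<le> i l \<and> i l \<le> n) \<and>
                    (\<forall>l\<in>{1..t}. \<forall>m\<in>{1..t}. l < m \<longrightarrow> i l < i m)"

end

theory Submission
  imports Defs "Jordan_Normal_Form.Determinant"
begin

lemma key:
  fixes \<alpha> :: "nat \<Rightarrow> 'a :: field" and m :: nat
  assumes inj: "inj_on \<alpha> {1..m+1}"
  shows "det (mat m m (\<lambda>(r, s). \<alpha> (s+2) ^ (r + 1) - \<alpha> (s+1) ^ (r + 1))) \<noteq> 0"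
proof
  let ?A = "mat m m (\<lambda>(r, s). \<alpha> (s+2) ^ (r + 1) - \<alpha> (s+1) ^ (r + 1))"
  assume d: "det ?A = 0"
  have Ac: "?A \<in> carrier_mat m m" by simp
  have "det (transpose_mat ?A) = 0" using d det_transpose[OF Ac] by simp
  then obtain v where v: "v \<in> carrier_vec m" "v \<noteq> 0\<^sub>v m" "transpose_mat ?A *\<^sub>v v = 0\<^sub>v m"
    using det_0_iff_vec_prod_zero_field[of "transpose_mat ?A" m] by auto
  have eq: "(\<Sum>r<m. v $ r * (\<alpha> (s+2) ^ (r + 1) - \<alpha> (s+1) ^ (r + 1))) = 0" if s: "s < m" for s
  proof -
    have "(transpose_mat ?A *\<^sub>v v) $ s = 0" using v(3) s by simp
    moreover have "(transpose_mat ?A *\<^sub>v v) $ s = (\<Sum>r<m. (\<alpha> (s+2) ^ (r + 1) - \<alpha> (s+1) ^ (r + 1)) * v $ r)"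
      using s v(1) by (simp add: scalar_prod_def lessThan_atLeast0 row_def)
    ultimately show ?thesis by (simp add: mult.commute)
  qed
  define p where "p = (\<Sum>r<m. monom (v $ r) (r+1))"
  have pp: "poly p x = (\<Sum>r<m. v $ r * x ^ (r+1))" for x
    unfolding p_def by (simp add: poly_sum poly_monom)
  have cp: "coeff p t = (\<Sum>r<m. if r+1 = t then v $ r else 0)" for t
    unfolding p_def by (simp add: coeff_sum coeff_monom)
  have degp: "degree p \<le> m"
    by (rule degree_le) (auto simp: cp intro!: sum.neutral)
  define c where "c = poly p (\<alpha> 1)"
  have all: "t \<le> m \<longrightarrow> poly p (\<alpha> (t+1)) = c" for t
  proof (induction t)
    case 0 then show ?case by (simp add: c_def)
  next
    case (Suc t)
    show ?case
    proof
      assume t: "Suc t \<le> m"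
      have "poly p (\<alpha> (t+2)) - poly p (\<alpha> (t+1)) = (\<Sum>r<m. v $ r * (\<alpha> (t+2) ^ (r + 1) - \<alpha> (t+1) ^ (r + 1)))"
        by (simp add: pp sum_subtractf right_diff_distrib)
      also have "\<dots> = 0" using eq t by simp
      finally show "poly p (\<alpha> (Suc t+1)) = c" using Suc t by simp
    qed
  qed
  have cardS: "card (\<alpha> ` {1..m+1}) = m+1" using card_image[OF inj] by simp
  have "p = [:c:]"
  proof (rule poly_eqI_degree[of "\<alpha> ` {1..m+1}"])
    fix x assume "x \<in> \<alpha> ` {1..m+1}"
    then obtain t where "t \<in> {1..m+1}" "x = \<alpha> t" by auto
    then show "poly p x = poly [:c:] x" using all[of "t-1"] by auto
  qed (use cardS degp in auto)
  hence "v $ r = 0" if "r < m" for r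
    using cp[of "r+1"] that by (simp add: if_distrib cong: if_cong) 
  hence "v = 0\<^sub>v m" using v(1) by (intro eq_vecI) auto
  with v(2) show False by simp
qed

theorem lemma3p8:
  fixes \<alpha> :: "nat \<Rightarrow> 'a :: {finite, field}" and k n :: nat
  assumes "k \<ge> 3"
    and "n \<ge> k * (k + 1) div 2 - 2"
    and "inj_on \<alpha> {1..n}"
  shows "\<exists>i j. in_S (k - 1) n i \<and> in_S (k - 1) n j \<and>
           (\<forall>l\<in>{1..k-1}. j l < i l \<and> i l \<le> k * (k + 1) div 2 - 2) \<and>
           invertible_mat (mat (k - 1) (k - 1)
              (\<lambda>(r, s). \<alpha> (i (s + 1)) ^ (r + 1) - \<alpha> (j (s + 1)) ^ (r + 1)))"
proof -
  define m where "m = k - 1"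
  have kN: "k \<le> k * (k + 1) div 2 - 2"
  proof -
    have "2 * k + 4 \<le> 3 * (k+1)" using assms(1) by simp
    also have "\<dots> \<le> k * (k+1)" using assms(1) by (rule mult_le_mono1)
    finally have "2 * k + 4 \<le> k * (k+1)" .
    thus ?thesis by linarith
  qed
  have mk: "m + 1 = k" using assms(1) m_def by simp
  have inj: "inj_on \<alpha> {1..m+1}" using assms(2,3) kN mk by (auto intro: inj_on_subset)
  let ?A = "mat m m (\<lambda>(r, s). \<alpha> (s+2) ^ (r + 1) - \<alpha> (s+1) ^ (r + 1))"
  have d: "det ?A \<noteq> 0" by (rule key[OF inj])
  have Ac: "?A \<in> carrier_mat m m" by simp
  from det_non_zero_imp_unit[OF Ac d, of "()"]
  obtain B where B: "B \<in> carrier_mat m m" "?A * B = 1\<^sub>m m" "B * ?A = 1\<^sub>m m"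
    by (auto simp: Units_def ring_mat_def)
  have inv: "invertible_mat ?A"
    unfolding invertible_mat_def inverts_mat_def square_mat.simps using B Ac by auto
  show ?thesis
  proof (intro exI conjI)
    show "in_S (k - 1) n (\<lambda>l. l + 1)" using assms(2) kN by (auto simp: in_S_def)
    show "in_S (k - 1) n (\<lambda>l. l)" using assms(2) kN by (auto simp: in_S_def)
    show "\<forall>l\<in>{1..k-1}. l < l + 1 \<and> l + 1 \<le> k * (k + 1) div 2 - 2" using kN by auto
    show "invertible_mat (mat (k - 1) (k - 1)
              (\<lambda>(r, s). \<alpha> (s + 1 + 1) ^ (r + 1) - \<alpha> (s + 1) ^ (r + 1)))"
      using inv by (simp add: m_def numeral_2_eq_2)
  qed
qed

end
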